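(* Let $G$ be an abelian group and $\phi:G\to\mathbb{H}$ a function with $\phi(0)=1$ and $\sup_{g\in G}|\phi(g)|=1$ satisfying, for all $a,b\in G$, $$2\,\mathrm{Re}\,\phi(b)\,\mathrm{Re}\,\phi(a)=\mathrm{Re}\,\phi(a+b)+\mathrm{Re}\,\phi(a-b),\qquad 2\,\mathrm{Re}\,\phi(b)\,\mathrm{Im}\,\phi(a)=\mathrm{Im}\,\phi(a+b)+\mathrm{Im}\,\phi(a-b).$$ Then there exists an imaginary unit $I\in\mathbb{H}$ such that $\phi(G)\subseteq\mathbb{C}_I$.
   Context: $\mathbb{H}$ is the real quaternion algebra; for $q=a_0+a_1i_1+a_2i_2+a_3i_3$, $\mathrm{Re}\,q=a_0$, $\mathrm{Im}\,q=a_1i_1+a_2i_2+a_3i_3$, $|q|=\sqrt{a_0^2+a_1^2+a_2^2+a_3^2}$. An imaginary unit is a quaternion $I$ with $\mathrm{Re}\,I=0$, $|I|=1$; $\mathbb{C}_I=\mathbb{R}\oplus I\mathbb{R}$. *)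

theory Defs
  imports "HOL-Analysis.Analysis"
begin

datatype quat = Quat (qc0: real) (qc1: real) (qc2: real) (qc3: real)

definition qadd :: "quat \<Rightarrow> quat \<Rightarrow> quat" where
  "qadd p q = Quat (qc0 p + qc0 q) (qc1 p + qc1 q) (qc2 p + qc2 q) (qc3 p + qc3 q)"

definition qscale :: "real \<Rightarrow> quat \<Rightarrow> quat" where
  "qscale r q = Quat (r * qc0 q) (r * qc1 q) (r * qc2 q) (r * qc3 q)"

definition qof_real :: "real \<Rightarrow> quat" where
  "qof_real r = Quat r 0 0 0"

definition qRe :: "quat \<Rightarrow> real" where
  "qRe q = qc0 q"

definition qIm :: "quat \<Rightarrow> quat" where
  "qIm q = Quat 0 (qc1 q) (qc2 q) (qc3 q)"

definition qnorm :: "quat \<Rightarrow> real" where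
  "qnorm q = sqrt ((qc0 q)^2 + (qc1 q)^2 + (qc2 q)^2 + (qc3 q)^2)"

definition imag_unit :: "quat \<Rightarrow> bool" where
  "imag_unit I \<longleftrightarrow> qRe I = 0 \<and> qnorm I = 1"

definition C_slice :: "quat \<Rightarrow> quat set" where
  "C_slice I = {qadd (qof_real x) (qscale y I) | x y. True}"

end

theory Submission
  imports Defs
begin

lemma cross_zero_aux:
  fixes u1 u2 u3 v1 v2 v3 :: real
  assumes "v1*u2 - v2*u1 = 0" "v2*u3 - v3*u2 = 0" "v1*u3 - v3*u1 = 0"
  shows "v1 * (u1^2+u2^2+u3^2) = (v1*u1+v2*u2+v3*u3) * u1"
    and "v2 * (u1^2+u2^2+u3^2) = (v1*u1+v2*u2+v3*u3) * u2"
    and "v3 * (u1^2+u2^2+u3^2) = (v1*u1+v2*u2+v3*u3) * u3"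
proof -
  have "v1 * (u1^2+u2^2+u3^2) - (v1*u1+v2*u2+v3*u3) * u1 = u2*(v1*u2 - v2*u1) + u3*(v1*u3 - v3*u1)"
    by (simp add: power2_eq_square algebra_simps)
  then show "v1 * (u1^2+u2^2+u3^2) = (v1*u1+v2*u2+v3*u3) * u1" using assms by simp
  have "v2 * (u1^2+u2^2+u3^2) - (v1*u1+v2*u2+v3*u3) * u2 = - u1*(v1*u2 - v2*u1) + u3*(v2*u3 - v3*u2)"
    by (simp add: power2_eq_square algebra_simps)
  then show "v2 * (u1^2+u2^2+u3^2) = (v1*u1+v2*u2+v3*u3) * u2" using assms by simp
  have "v3 * (u1^2+u2^2+u3^2) - (v1*u1+v2*u2+v3*u3) * u3 = - u1*(v1*u3 - v3*u1) - u2*(v2*u3 - v3*u2)"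
    by (simp add: power2_eq_square algebra_simps)
  then show "v3 * (u1^2+u2^2+u3^2) = (v1*u1+v2*u2+v3*u3) * u3" using assms by simp
qed

lemma sq3_zero:
  fixes x y z :: real
  assumes "x^2 + y^2 + z^2 \<le> 0"
  shows "x = 0 \<and> y = 0 \<and> z = 0"
proof -
  have "x^2 \<ge> 0" "y^2 \<ge> 0" "z^2 \<ge> 0" by simp_all
  then have "x^2 = 0" "y^2 = 0" "z^2 = 0" using assms by linarith+
  then show ?thesis by simp
qed

lemma sq3_pos:
  fixes x y z :: real
  assumes "x^2 + y^2 + z^2 \<noteq> 0"
  shows "x^2 + y^2 + z^2 > 0"
proof -
  have "x^2 \<ge> 0" "y^2 \<ge> 0" "z^2 \<ge> 0" by simp_all
  then show ?thesis using assms by linarith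
qed

theorem mainTheorem10:
  fixes \<phi> :: "'g::ab_group_add \<Rightarrow> quat"
  assumes "\<phi> 0 = qof_real 1"
    and "bdd_above (range (\<lambda>g. qnorm (\<phi> g)))"
    and "(SUP g. qnorm (\<phi> g)) = 1"
    and "\<And>a b. 2 * qRe (\<phi> b) * qRe (\<phi> a) = qRe (\<phi> (a + b)) + qRe (\<phi> (a - b))"
    and "\<And>a b. qscale (2 * qRe (\<phi> b)) (qIm (\<phi> a)) = qadd (qIm (\<phi> (a + b))) (qIm (\<phi> (a - b)))"
  shows "\<exists>I. imag_unit I \<and> range \<phi> \<subseteq> C_slice I"
proof -
  define f where "f x = qc0 (\<phi> x)" for x
  define c where "c i x = (if i = (1::nat) then qc1 (\<phi> x) else if i = 2 then qc2 (\<phi> x) else qc3 (\<phi> x))" for i x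
  have bnd: "qnorm (\<phi> x) \<le> 1" for x
    using cSUP_upper[OF UNIV_I assms(2)] assms(3) by simp
  have sq: "(f x)^2 + (c 1 x)^2 + (c 2 x)^2 + (c 3 x)^2 \<le> 1" for x
  proof -
    have "sqrt ((f x)^2 + (c 1 x)^2 + (c 2 x)^2 + (c 3 x)^2) \<le> 1"
      using bnd[of x] by (simp add: qnorm_def f_def c_def)
    then show ?thesis by (simp add: real_sqrt_le_1_iff)
  qed
  have eq: "2 * f b * c i a = c i (a+b) + c i (a-b)" for i a b
    using assms(5)[of b a] by (auto simp: qscale_def qadd_def qIm_def qRe_def f_def c_def)
  have z: "c i 0 = 0" for i using assms(1) by (simp add: c_def qof_real_def)
  have odd: "c i (-b) = - c i b" for i b
    using eq[of b i 0] z[of i] by simp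
  have add: "c i (a+b) = f b * c i a + f a * c i b" and sub: "c i (a-b) = f b * c i a - f a * c i b" for i a b
  proof -
    have "2 * f a * c i b = c i (a+b) - c i (a-b)"
      using eq[of a i b] odd[of i "a-b"] by (simp add: add.commute)
    then show "c i (a+b) = f b * c i a + f a * c i b" "c i (a-b) = f b * c i a - f a * c i b"
      using eq[of b i a] by (simp_all add: algebra_simps)
  qed
  have cross: "c i x * c j a - c j x * c i a = 0" for i j x a
  proof -
    define h where "h y = c i y * c j a - c j y * c i a" for y
    have hp: "h (y+a) = f a * h y" for y
      unfolding h_def add by (simp add: algebra_simps)
    have hm: "h (y-a) = f a * h y" for y
      unfolding h_def sub by (simp add: algebra_simps)
    have "h x = f a * h (x+a)" using hm[of "x+a"] by simp
    also have "\<dots> = (f a)^2 * h x" using hp[of x] by (simp add: power2_eq_square)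
    finally have hx: "h x = (f a)^2 * h x" .
    show ?thesis
    proof (cases "(f a)^2 = 1")
      case True
      then have "(c 1 a)^2 + (c 2 a)^2 + (c 3 a)^2 \<le> 0" using sq[of a] by simp
      then have "c 1 a = 0 \<and> c 2 a = 0 \<and> c 3 a = 0"
        by (rule sq3_zero)
      then have "c k a = 0" for k by (simp add: c_def split: if_splits)
      then show ?thesis by simp
    next
      case False
      then have "h x = 0" using hx
        by (metis mult_cancel_right1)
      then show ?thesis by (simp add: h_def)
    qed
  qed
  show ?thesis
  proof (cases "\<exists>a. (c 1 a)^2 + (c 2 a)^2 + (c 3 a)^2 \<noteq> 0")
    case False
    then have z3: "c 1 x = 0 \<and> c 2 x = 0 \<and> c 3 x = 0" for x
      by (intro sq3_zero) auto
    define I where "I = Quat 0 1 0 0"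
    have "imag_unit I" by (simp add: I_def imag_unit_def qRe_def qnorm_def)
    moreover have "range \<phi> \<subseteq> C_slice I"
    proof
      fix q assume "q \<in> range \<phi>"
      then obtain x where qx: "q = \<phi> x" by auto
      have "\<phi> x = qadd (qof_real (f x)) (qscale 0 I)"
        using z3[of x] by (cases "\<phi> x") (simp add: qadd_def qof_real_def qscale_def I_def f_def c_def)
      then show "q \<in> C_slice I" unfolding C_slice_def qx by blast
    qed
    ultimately show ?thesis by blast
  next
    case True
    then obtain a where na: "(c 1 a)^2 + (c 2 a)^2 + (c 3 a)^2 \<noteq> 0" by blast
    define N where "N = (c 1 a)^2 + (c 2 a)^2 + (c 3 a)^2"
    have Npos: "N > 0" using na unfolding N_def
      by (rule sq3_pos)
    define n where "n = sqrt N"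
    have npos: "n > 0" using Npos by (simp add: n_def)
    have nn: "n * n = N" using Npos by (simp add: n_def)
    define I where "I = Quat 0 (c 1 a / n) (c 2 a / n) (c 3 a / n)"
    have "(c 1 a / n)^2 + (c 2 a / n)^2 + (c 3 a / n)^2 = N / (n*n)"
      by (simp add: N_def power_divide add_divide_distrib power2_eq_square)
    also have "\<dots> = 1" using nn Npos by simp
    finally have "imag_unit I" by (simp add: I_def imag_unit_def qRe_def qnorm_def)
    moreover have "range \<phi> \<subseteq> C_slice I"
    proof
      fix q assume "q \<in> range \<phi>"
      then obtain x where qx: "q = \<phi> x" by auto
      define y where "y = (c 1 x * c 1 a + c 2 x * c 2 a + c 3 x * c 3 a) / n"
      have k: "c k x * N = (c 1 x * c 1 a + c 2 x * c 2 a + c 3 x * c 3 a) * c k a" if "k \<in> {1,2,3}" for k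
        using cross_zero_aux[OF cross[of 1 x 2 a] cross[of 2 x 3 a] cross[of 1 x 3 a]] that
        unfolding N_def by auto
      have kk: "c k x = y * (c k a / n)" if "k \<in> {1,2,3}" for k
      proof -
        have "c k x = c k x * N / N" using Npos by simp
        also have "\<dots> = (c 1 x * c 1 a + c 2 x * c 2 a + c 3 x * c 3 a) * c k a / (n*n)"
          using k[OF that] nn by simp
        also have "\<dots> = y * (c k a / n)" by (simp add: y_def)
        finally show ?thesis .
      qed
      have "\<phi> x = qadd (qof_real (f x)) (qscale y I)"
        using kk[of 1] kk[of 2] kk[of 3]
        by (cases "\<phi> x") (simp add: qadd_def qof_real_def qscale_def I_def f_def c_def)
      then show "q \<in> C_slice I" unfolding C_slice_def qx by blast
    qed
    ultimately show ?thesis by blast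
  qed
qed

end
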